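(* Let $1<\beta<2$ and let $r^{(\beta)}_k$ ($k\in\mathbb{Z}$) be as defined in the context. Then $$\sum_{k=0}^{m}r^{(\beta)}_{j-k}>0\quad\text{for all } m\ge2,\ 1\le j\le m-1,$$ and $$\sum_{k=1-m}^{m-1}r^{(\beta)}_{k}>\frac{c^{(\beta)}_{\ast}}{m^{\beta}}>0\quad\text{for all } m\ge2,$$ where $c^{(\beta)}_{\ast}=\frac{(1-\beta)(2-\beta)(3-\beta)4^{\beta}e^{-9/4}\Psi_\beta}{3}$ and $\Psi_\beta=\frac{1}{2\cos(\pi\beta/2)}$.
   Context: Let $g^{(\beta)}_k=(-1)^k\binom{\beta}{k}$ for $k\ge0$ (equivalently $g^{(\beta)}_0=1$, $g^{(\beta)}_k=(1-\frac{\beta+1}{k})g^{(\beta)}_{k-1}$). Let $\Psi_\beta=\frac{1}{2\cos(\pi\beta/2)}$ and define $r^{(\beta)}_0=2\Psi_\beta\big(\frac{\beta}{2}g^{(\beta)}_1+\frac{2-\beta}{2}g^{(\beta)}_0\big)$, $r^{(\beta)}_1=\Psi_\beta\big(\frac{\beta}{2}g^{(\beta)}_0+\frac{2-\beta}{2}g^{(\beta)}_1+\frac{\beta}{2}g^{(\beta)}_2\big)$, $r^{(\beta)}_k=\Psi_\beta\big(\frac{\beta}{2}g^{(\beta)}_{k+1}+\frac{2-\beta}{2}g^{(\beta)}_k\big)$ for $k\ge2$, and $r^{(\beta)}_{-k}=r^{(\beta)}_k$ for $k\ge1$. *)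

theory Defs
  imports Complex_Main
begin

definition gcoef :: "real \<Rightarrow> nat \<Rightarrow> real" where
  "gcoef \<beta> k = (-1) ^ k * (\<beta> gchoose k)"

definition Psi :: "real \<Rightarrow> real" where
  "Psi \<beta> = 1 / (2 * cos (pi * \<beta> / 2))"

definition rnat :: "real \<Rightarrow> nat \<Rightarrow> real" where
  "rnat \<beta> k =
     (if k = 0 then 2 * Psi \<beta> * (\<beta> / 2 * gcoef \<beta> 1 + (2 - \<beta>) / 2 * gcoef \<beta> 0)
      else if k = 1 then Psi \<beta> * (\<beta> / 2 * gcoef \<beta> 0 + (2 - \<beta>) / 2 * gcoef \<beta> 1
                                   + \<beta> / 2 * gcoef \<beta> 2)
      else Psi \<beta> * (\<beta> / 2 * gcoef \<beta> (k + 1) + (2 - \<beta>) / 2 * gcoef \<beta> k))"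

definition rcoef :: "real \<Rightarrow> int \<Rightarrow> real" where
  "rcoef \<beta> k = rnat \<beta> (nat \<bar>k\<bar>)"

definition cstar :: "real \<Rightarrow> real" where
  "cstar \<beta> = (1 - \<beta>) * (2 - \<beta>) * (3 - \<beta>) * 4 powr \<beta> * exp (- 9 / 4) * Psi \<beta> / 3"

end

theory Submission
  imports Defs
begin

definition hh :: "real \<Rightarrow> nat \<Rightarrow> real" where
  "hh b n = (-1) ^ n * ((b - 1) gchoose n)"

lemma hh_0[simp]: "hh b 0 = 1" by (simp add: hh_def)

lemma hh_gcoef: "hh b (Suc n) = hh b n + gcoef b (Suc n)"
proof -
  have "(b gchoose (Suc n)) = ((b - 1) gchoose n) + ((b - 1) gchoose (Suc n))"
    using gbinomial_Suc_Suc[of "b - 1" n] by simp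
  then show ?thesis by (simp add: hh_def gcoef_def algebra_simps)
qed

lemma hh_Suc: "hh b (Suc n) = hh b n * (real n + 1 - b) / (real n + 1)"
proof -
  have e: "(b - 1) * ((b - 1) gchoose n) = real n * ((b - 1) gchoose n) + real (Suc n) * ((b - 1) gchoose (Suc n))"
    using gbinomial_mult_1[of "b - 1" n] by simp
  have d: "((b - 1) gchoose (Suc n)) = (b - 1 - real n) * ((b - 1) gchoose n) / (real n + 1)"
    using e by (simp add: field_simps)
  show ?thesis unfolding hh_def d by (simp add: field_simps)
qed

lemma gcoef_eq: "gcoef b (Suc n) = hh b (Suc n) - hh b n"
  using hh_gcoef[of b n] by simp

lemma gcoef_0: "gcoef b 0 = 1" by (simp add: gcoef_def)

definition TT :: "real \<Rightarrow> nat \<Rightarrow> real" where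
  "TT b n = Psi b * (b * hh b (Suc n) + (2 - b) * hh b n)"

definition UU :: "real \<Rightarrow> nat \<Rightarrow> real" where
  "UU b n = (if n = 0 then rnat b 0 else TT b n)"

lemma hh_1': "hh b (Suc 0) = 1 - b" using hh_Suc[of b 0] by simp
lemma hh_2': "hh b (Suc (Suc 0)) = (1 - b) * (2 - b) / 2"
  using hh_Suc[of b "Suc 0"] hh_1'[of b] by (simp add: field_simps)
lemma hh_3': "hh b (Suc (Suc (Suc 0))) = (1 - b) * (2 - b) * (3 - b) / 6"
  using hh_Suc[of b "Suc (Suc 0)"] hh_2'[of b] by (simp add: field_simps)
lemma hh_1: "hh b 1 = 1 - b" using hh_1' by simp
lemma hh_2: "hh b 2 = (1 - b) * (2 - b) / 2" using hh_2' by (simp add: eval_nat_numeral)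
lemma hh_3: "hh b 3 = (1 - b) * (2 - b) * (3 - b) / 6" using hh_3' by (simp add: eval_nat_numeral)

lemma UU_step: "UU b (Suc n) - UU b n = 2 * rnat b (Suc n)"
proof (cases n)
  case 0
  have g1: "gcoef b (Suc 0) = - b" using gcoef_eq[of b 0] hh_1'[of b] by simp
  have g2: "gcoef b (Suc (Suc 0)) = b * (b - 1) / 2" using gcoef_eq[of b "Suc 0"] hh_1'[of b] hh_2'[of b]
    by (simp add: field_simps)
  show ?thesis using 0 unfolding UU_def TT_def rnat_def
    by (simp add: g1 g2 gcoef_0 hh_1' hh_2' numeral_2_eq_2 field_simps)
next
  case (Suc k)
  then show ?thesis unfolding UU_def TT_def rnat_def
    by (simp add: gcoef_eq field_simps)
qed

lemma Psi_neg: assumes "1 < b" "b < 2" shows "Psi b < 0"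
proof -
  have "0 < cos (pi - pi * b / 2)"
    by (rule cos_gt_zero_pi) (use assms in \<open>auto simp: field_simps\<close>)
  then have "cos (pi * b / 2) < 0" by simp
  then show ?thesis unfolding Psi_def by (simp add: divide_neg_pos)
qed

lemma hh_neg: assumes "1 < b" "b < 2" "n \<ge> 1" shows "hh b n < 0"
  using assms(3)
proof (induction n rule: dec_induct)
  case base then show ?case using hh_1 assms by simp
next
  case (step n)
  have "real n + 1 - b > 0" using step assms by linarith
  then show ?case using step hh_Suc[of b n] by (simp add: divide_neg_pos mult_neg_pos)
qed

lemma TT_pos: assumes "1 < b" "b < 2" "n \<ge> 1" shows "TT b n > 0"
proof -
  have "hh b n < 0" "hh b (Suc n) < 0" using hh_neg assms by auto
  then have "b * hh b (Suc n) + (2 - b) * hh b n < 0" using assms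
    by (smt (verit) mult_pos_neg)
  then show ?thesis unfolding TT_def using Psi_neg[OF assms(1,2)] by (simp add: mult_neg_neg)
qed

lemma UU_pos: assumes "1 < b" "b < 2" shows "UU b n > 0"
proof (cases "n = 0")
  case True
  have "rnat b 0 = Psi b * ((1 - b) * (2 + b))" unfolding rnat_def
    by (simp add: gcoef_eq hh_1' gcoef_0 field_simps)
  moreover have "(1 - b) * (2 + b) < 0" using assms by (simp add: mult_neg_pos)
  ultimately show ?thesis using True Psi_neg[OF assms] unfolding UU_def by (simp add: mult_neg_neg)
next
  case False then show ?thesis using TT_pos[OF assms] unfolding UU_def by simp
qed

lemma sum_left: "(\<Sum>i = - int a..0. rcoef b i) = (UU b a + UU b 0) / 2"
proof (induction a)
  case 0 then show ?case by (simp add: rcoef_def UU_def)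
next
  case (Suc a)
  have e: "{- int (Suc a)..0} = insert (- int (Suc a)) {- int a..0}" by auto
  have r: "rcoef b (- int (Suc a)) = rnat b (Suc a)" by (simp add: rcoef_def nat_add_distrib)
  show ?case unfolding e using Suc UU_step[of b a] r by (simp add: field_simps)
qed

lemma sum_two: "(\<Sum>i = - int a..int c. rcoef b i) = (UU b a + UU b c) / 2"
proof (induction c)
  case 0 then show ?case using sum_left by simp
next
  case (Suc c)
  have e: "{- int a..int (Suc c)} = insert (int (Suc c)) {- int a..int c}" by auto
  have r: "rcoef b (int (Suc c)) = rnat b (Suc c)" by (simp add: rcoef_def nat_add_distrib)
  show ?case unfolding e using Suc UU_step[of b c] r by (simp add: field_simps)
qed

lemma bern: fixes t b :: real assumes "t \<ge> 0" "b \<ge> 1" shows "(1 + t) powr b \<ge> 1 + b * t"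
proof -
  have p: "(1 + t) powr b = (1 + t) * (1 + t) powr (b - 1)"
    using powr_add[of "1 + t" 1 "b - 1"] assms by simp
  have l: "ln (1 + t) \<ge> t / (1 + t)"
  proof -
    have "ln (1 / (1 + t)) \<le> 1 / (1 + t) - 1" using assms by (intro ln_le_minus_one) simp
    then have "- ln (1 + t) \<le> - t / (1 + t)" using assms by (simp add: ln_div field_simps)
    then show ?thesis by simp
  qed
  have "(1 + t) powr (b - 1) = exp ((b - 1) * ln (1 + t))" using assms by (simp add: powr_def)
  also have "\<dots> \<ge> 1 + (b - 1) * ln (1 + t)" by simp
  finally have "(1 + t) powr (b - 1) \<ge> 1 + (b - 1) * (t / (1 + t))"
    using l assms by (smt (verit) mult_left_mono)
  then have "(1 + t) * (1 + t) powr (b - 1) \<ge> (1 + t) * (1 + (b - 1) * (t / (1 + t)))"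
    using assms by (intro mult_left_mono) auto
  also have "(1 + t) * (1 + (b - 1) * (t / (1 + t))) = 1 + b * t" using assms by (simp add: field_simps)
  finally show ?thesis using p by simp
qed

lemma aux_eq: fixes x N h p b :: real assumes "x > 0" "N > 0"
  shows "h * (x / N) * (p * (1 + b / x)) = h * p * ((x + b) / N)"
  using assms by (simp add: field_simps)

lemma R_mono: assumes "1 < b" "b < 2" "n \<ge> 3"
  shows "- hh b n * (real n + 1 - b) powr b \<ge> - hh b 3 * (4 - b) powr b"
  using assms(3)
proof (induction n rule: dec_induct)
  case base then show ?case by simp
next
  case (step n)
  define x where "x = real n + 1 - b"
  have x: "x > 0" using step assms unfolding x_def by linarith
  have hn: "- hh b n > 0" using hh_neg[of b n] assms step by simp
  have xx: "x * (1 + 1 / x) = x + 1" using x by (simp add: field_simps)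
  have "(x + 1) powr b = (x * (1 + 1 / x)) powr b" by (simp only: xx)
  also have "\<dots> = x powr b * (1 + 1 / x) powr b" using x by (simp add: powr_mult)
  also have "\<dots> \<ge> x powr b * (1 + b * (1 / x))"
    using bern[of "1 / x" b] x assms by (intro mult_left_mono) auto
  finally have xb: "(x + 1) powr b \<ge> x powr b * (1 + b / x)" by simp
  have "- hh b (Suc n) * (real (Suc n) + 1 - b) powr b = (- hh b n) * (x / (real n + 1)) * (x + 1) powr b"
    unfolding hh_Suc x_def by (simp add: field_simps)
  also have "\<dots> \<ge> (- hh b n) * (x / (real n + 1)) * (x powr b * (1 + b / x))"
  proof -
    have "0 \<le> (- hh b n) * (x / (real n + 1))" using hn x by (intro mult_nonneg_nonneg) auto
    from mult_left_mono[OF xb this] show ?thesis .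
  qed
  also have "(- hh b n) * (x / (real n + 1)) * (x powr b * (1 + b / x)) = - hh b n * x powr b"
  proof -
    have N: "x + b = real n + 1" by (simp add: x_def)
    have "(- hh b n) * (x / (real n + 1)) * (x powr b * (1 + b / x)) = (- hh b n) * x powr b * ((x + b) / (real n + 1))"
      by (rule aux_eq) (use x in auto)
    then show ?thesis using N by simp
  qed
  finally show ?case using step.IH unfolding x_def by simp
qed

lemma TT_form: "TT b n = Psi b * hh b n * (2 - b^2 / (real n + 1))"
proof -
  have "real n + 1 > 0" by simp
  then show ?thesis unfolding TT_def hh_Suc by (simp add: field_simps power2_eq_square)
qed

lemma exp_bound: "exp (- 9 / 4 :: real) \<le> 1 / 8"
proof -
  have "1 + 3/4 + (3/4)^2/2 \<le> exp (3/4 :: real)" by (rule exp_lower_Taylor_quadratic) simp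
  then have "(65/32::real) \<le> exp (3/4)" by (simp add: power2_eq_square)
  then have "(65/32::real)^3 \<le> exp (3/4) ^ 3" by (intro power_mono) auto
  also have "exp (3/4::real) ^ 3 = exp (9/4)" using exp_of_nat_mult[of 3 "3/4::real"] by simp
  finally have "(65/32::real)^3 \<le> exp (9/4)" .
  moreover have "(8::real) \<le> (65/32)^3" by (simp add: power3_eq_cube)
  ultimately have "8 \<le> exp (9/4::real)" by linarith
  then show ?thesis by (simp add: exp_minus field_simps)
qed

lemma cstar_split: assumes "M > 0"
  shows "cstar b / M powr b = (- Psi b) * (b - 1) * (2 - b) * ((3 - b) * (4 powr b / M powr b) * exp (- 9 / 4) / 3)"
  unfolding cstar_def using assms by (simp add: field_simps)

lemma cstar_pos: assumes "1 < b" "b < 2" shows "cstar b > 0"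
proof -
  have "(- Psi b) * (b - 1) * (2 - b) * ((3 - b) * 4 powr b * exp (- 9 / 4) / 3) > 0"
    using Psi_neg[OF assms] assms by (intro mult_pos_pos) auto
  then show ?thesis unfolding cstar_def by (simp add: algebra_simps)
qed

lemma four_powr: fixes b :: real assumes "1 < b" "b < 2" shows "4 powr b \<le> 4 * 2 powr b"
proof -
  have "4 powr b = 2 powr b * 2 powr b"
    using powr_mult[of 2 2 b] by simp
  moreover have "2 powr b \<le> 2 powr (2::real)" using assms by (intro powr_mono) auto
  ultimately show ?thesis by (simp add: mult_right_mono)
qed

lemma prod3_le: fixes x y z x' y' z' :: real
  assumes "0 \<le> x" "x \<le> x'" "0 \<le> y" "y \<le> y'" "0 \<le> z" "z \<le> z'"
  shows "x * y * z \<le> x' * y' * z'"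
proof -
  have "x * y \<le> x' * y'" using assms by (intro mult_mono) auto
  then show ?thesis using assms by (intro mult_mono) auto
qed

lemma core_bound: assumes "1 < b" "b < 2" "n \<ge> 1"
  shows "(- hh b n) * (2 - b^2 / (real n + 1)) >
         (b - 1) * (2 - b) * ((3 - b) * (4 powr b / (real n + 1) powr b) * exp (- 9 / 4) / 3)"
proof -
  define P where "P = (b - 1) * (2 - b)"
  define E where "E = exp (- 9 / 4 :: real)"
  have P: "P > 0" using assms unfolding P_def by simp
  have E: "0 \<le> E" "E \<le> 1/8" unfolding E_def using exp_bound by auto
  have "b * b < 2 * 2" using assms by (intro mult_strict_mono) auto
  then have b2: "b^2 < 4" by (simp add: power2_eq_square)
  consider "n = 1" | "n = 2" | "n \<ge> 3" using assms by linarith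
  then show ?thesis
  proof cases
    case 1
    have X: "4 powr b / 2 powr b = 2 powr b" using powr_mult[of 2 2 b] by simp
    have "2 powr b \<le> 2 powr (2::real)" using assms by (intro powr_mono) auto
    then have X2: "4 powr b / 2 powr b \<le> 4" using X by simp
    have "(3 - b) * (4 powr b / 2 powr b) * E \<le> 2 * 4 * (1/8)"
      using assms E X2 by (intro prod3_le) auto
    then have br: "(3 - b) * (4 powr b / 2 powr b) * E / 3 \<le> 1 / 3" by simp
    have lhs: "(- hh b n) * (2 - b^2 / (real n + 1)) = P * ((2 + b) / 2)"
      using 1 unfolding P_def by (simp add: hh_1 hh_1' field_simps power2_eq_square)
    have "P * ((3 - b) * (4 powr b / 2 powr b) * E / 3) \<le> P * (1/3)"
      using br P by (intro mult_left_mono) auto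
    also have "\<dots> < P * ((2 + b) / 2)" using P assms by (intro mult_strict_left_mono) auto
    finally have c: "P * ((3 - b) * (4 powr b / 2 powr b) * E / 3) < P * ((2 + b) / 2)" .
    have rn: "real n + 1 = 2" using 1 by simp
    show ?thesis unfolding rn P_def[symmetric] E_def[symmetric] using c lhs[unfolded rn] by linarith
  next
    case 2
    have X: "4 powr b / 3 powr b = (4/3) powr b" by (simp add: powr_divide)
    have "(4/3) powr b \<le> (4/3) powr (2::real)" using assms by (intro powr_mono) auto
    then have X2: "4 powr b / 3 powr b \<le> 16/9" using X by (simp add: power2_eq_square)
    have "(3 - b) * (4 powr b / 3 powr b) * E \<le> 2 * (16/9) * (1/8)"
      using assms E X2 by (intro prod3_le) auto
    moreover have "\<forall>y::real. y \<le> 2 * (16/9) * (1/8) \<longrightarrow> y / 3 \<le> 4 / 27" by simp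
    ultimately have br: "(3 - b) * (4 powr b / 3 powr b) * E / 3 \<le> 4 / 27" by blast
    have f: "2 - b^2 / 3 \<ge> 2 / 3" using b2 by simp
    have lhs: "(- hh b n) * (2 - b^2 / (real n + 1)) = (P / 2) * (2 - b^2 / 3)"
      using 2 unfolding P_def by (simp add: hh_2 field_simps)
    have "P * ((3 - b) * (4 powr b / 3 powr b) * E / 3) \<le> P * (4/27)"
      using br P by (intro mult_left_mono) auto
    also have "\<dots> < (P / 2) * (2 / 3)" using P by simp
    also have "\<dots> \<le> (P / 2) * (2 - b^2 / 3)" using f P by (intro mult_left_mono) auto
    finally have c: "P * ((3 - b) * (4 powr b / 3 powr b) * E / 3) < (P / 2) * (2 - b^2 / 3)" .
    have rn: "real n + 1 = 3" using 2 by simp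
    show ?thesis unfolding rn P_def[symmetric] E_def[symmetric] using c lhs[unfolded rn] by linarith
  next
    case 3
    define M where "M = real n + 1"
    have M: "M \<ge> 4" "M - b > 0" using 3 assms unfolding M_def by auto
    define K where "K = P * (3 - b) * (4 - b) powr b / 6"
    have K: "K > 0" using P assms unfolding K_def by simp
    have hK: "- hh b 3 * (4 - b) powr b = K" unfolding K_def P_def hh_3 by (simp add: field_simps)
    have R: "- hh b n * (M - b) powr b \<ge> K" using R_mono[OF assms(1,2) 3] hK unfolding M_def by simp
    have pMb: "(M - b) powr b > 0" using M by simp
    have h1: "- hh b n \<ge> K / (M - b) powr b" using R pMb by (simp add: divide_le_eq)
    have "(M - b) powr b < M powr b" using M assms by (intro powr_less_mono2) auto
    moreover have "0 < M powr b * (M - b) powr b" using M pMb by (intro mult_pos_pos) auto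
    ultimately have h2: "K / (M - b) powr b > K / M powr b" using K by (intro divide_strict_left_mono) auto
    have t1: "(4 - b) powr b \<ge> 2 powr b" using assms by (intro powr_mono2) auto
    have t2: "4 powr b \<le> 4 * 2 powr b" by (rule four_powr[OF assms(1,2)])
    have "2 * 4 powr b * E \<le> 2 * (4 * 2 powr b) * (1/8)"
      using t2 E by (intro prod3_le) auto
    then have t3: "2 * 4 powr b * E \<le> (4 - b) powr b" using t1 by simp
    have pM: "M powr b > 0" using M by simp
    have h3: "K / M powr b \<ge> P * ((3 - b) * (4 powr b / M powr b) * E / 3)"
    proof -
      have "P * ((3 - b) * (4 powr b / M powr b) * E / 3) = (P * (3 - b) / 6) * (2 * 4 powr b * E) / M powr b"
        using pM by (simp add: field_simps)
      also have "\<dots> \<le> (P * (3 - b) / 6) * (4 - b) powr b / M powr b"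
        using t3 P assms pM by (intro divide_right_mono mult_left_mono) auto
      also have "\<dots> = K / M powr b" unfolding K_def by simp
      finally show ?thesis .
    qed
    have f: "2 - b^2 / M \<ge> 1" using b2 M by (simp add: field_simps)
    have hpos: "- hh b n > 0" using hh_neg[OF assms] by simp
    have "P * ((3 - b) * (4 powr b / M powr b) * E / 3) < - hh b n" using h1 h2 h3 by linarith
    also have "\<dots> \<le> - hh b n * (2 - b^2 / M)" using f hpos by (simp add: mult_le_cancel_left1)
    finally have c: "P * ((3 - b) * (4 powr b / M powr b) * E / 3) < - hh b n * (2 - b^2 / M)" .
    show ?thesis unfolding M_def[symmetric] P_def[symmetric] E_def[symmetric] using c .
  qed
qed

lemma TT_gt: assumes "1 < b" "b < 2" "n \<ge> 1"
  shows "TT b n > cstar b / (real n + 1) powr b"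
proof -
  have "(- Psi b) * ((b - 1) * (2 - b) * ((3 - b) * (4 powr b / (real n + 1) powr b) * exp (- 9 / 4) / 3))
      < (- Psi b) * ((- hh b n) * (2 - b^2 / (real n + 1)))"
    using core_bound[OF assms] Psi_neg[OF assms(1,2)] by (intro mult_strict_left_mono) auto
  moreover have "cstar b / (real n + 1) powr b = (- Psi b) * ((b - 1) * (2 - b) * ((3 - b) * (4 powr b / (real n + 1) powr b) * exp (- 9 / 4) / 3))"
    using cstar_split[of "real n + 1" b] by (simp add: mult.assoc)
  moreover have "TT b n = (- Psi b) * ((- hh b n) * (2 - b^2 / (real n + 1)))"
    using TT_form[of b n] by simp
  ultimately show ?thesis by simp
qed

theorem lemma2p8:
  fixes \<beta> :: real
  assumes "1 < \<beta>" and "\<beta> < 2"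
  shows "(\<forall>m j :: int. 2 \<le> m \<longrightarrow> 1 \<le> j \<longrightarrow> j \<le> m - 1 \<longrightarrow>
            (\<Sum>k = 0..m. rcoef \<beta> (j - k)) > 0)
       \<and> (\<forall>m :: int. 2 \<le> m \<longrightarrow>
            (\<Sum>k = 1 - m..m - 1. rcoef \<beta> k) > cstar \<beta> / (real_of_int m) powr \<beta>
          \<and> cstar \<beta> / (real_of_int m) powr \<beta> > 0)"
proof (intro conjI allI impI)
  fix m j :: int
  assume m: "2 \<le> m" and j: "1 \<le> j" "j \<le> m - 1"
  have "(\<Sum>k = 0..m. rcoef \<beta> (j - k)) = (\<Sum>i = j - m..j. rcoef \<beta> i)"
    by (rule sum.reindex_bij_witness[of _ "\<lambda>i. j - i" "\<lambda>i. j - i"]) auto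
  also have "{j - m..j} = {- int (nat (m - j))..int (nat j)}" using m j by auto
  also have "(\<Sum>i = - int (nat (m - j))..int (nat j). rcoef \<beta> i) = (UU \<beta> (nat (m - j)) + UU \<beta> (nat j)) / 2"
    by (rule sum_two)
  also have "\<dots> > 0" using UU_pos[OF assms] by (simp add: add_pos_pos)
  finally show "(\<Sum>k = 0..m. rcoef \<beta> (j - k)) > 0" .
next
  fix m :: int
  assume m: "2 \<le> m"
  define n where "n = nat (m - 1)"
  have n: "n \<ge> 1" "real_of_int m = real n + 1" using m unfolding n_def by auto
  have "{1 - m..m - 1} = {- int n..int n}" using m unfolding n_def by auto
  then have "(\<Sum>k = 1 - m..m - 1. rcoef \<beta> k) = (UU \<beta> n + UU \<beta> n) / 2"
    using sum_two[of \<beta> n n] by (simp only:)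
  also have "\<dots> = TT \<beta> n" using n unfolding UU_def by simp
  finally show "(\<Sum>k = 1 - m..m - 1. rcoef \<beta> k) > cstar \<beta> / (real_of_int m) powr \<beta>"
    using TT_gt[OF assms n(1)] n(2) by simp
next
  fix m :: int
  assume m: "2 \<le> m"
  show "cstar \<beta> / (real_of_int m) powr \<beta> > 0" using cstar_pos[OF assms] m by simp
qed

end
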